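(* Let $q\ge1$ with $q=o(d/\log d)$. Let $U_1,\dots,U_{d-1}$ be iid uniform on $[0,1]$, let $F$ be the CDF of $\sum_{i=1}^{d-1}U_i^q$, let $\tau=\tau^q_{1/2}$, and set $\psi(\ell)=F(\tau^q)-F(\tau^q-\ell^q)$ for $\ell\in[0,1]$. Then $$\int_0^1\psi(\ell)\,d\ell=O\Big(\frac{1}{\sqrt{dq}}\Big)\qquad\text{and}\qquad\int_0^1\psi(\ell)^2\,d\ell=O\Big(\frac1d\Big).$$
   Context: $\tau^q_{1/2}$ is the radius such that $\mathbf{P}[\|\mathbf{x}-\mathbf{y}\|_q\le\tau^q_{1/2}]=1/2$ for $\mathbf{x},\mathbf{y}$ iid uniform on the torus $\mathbb{T}^d=\mathbb{R}^d/2\mathbb{Z}^d$, where $\|\mathbf{x}-\mathbf{y}\|_q=(\sum_{i=1}^d|x_i-y_i|_C^q)^{1/q}$ and $|\cdot|_C\in[0,1]$ is circular distance on a circle of circumference 2 (equivalently, $\mathbf{P}[\sum_{i=1}^dU_i^q\le(\tau^q_{1/2})^q]=1/2$ for iid uniform $U_i$ on $[0,1]$). *)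

theory Defs
  imports "HOL-Probability.Probability" "HOL-Library.Landau_Symbols"
begin

definition unif_cube :: "nat \<Rightarrow> (nat \<Rightarrow> real) measure" where
  "unif_cube n = PiM {..<n} (\<lambda>_. uniform_measure lborel {0..1::real})"

definition sumpow_cdf :: "nat \<Rightarrow> real \<Rightarrow> real \<Rightarrow> real" where
  "sumpow_cdf n q t =
     measure (unif_cube n) {u \<in> space (unif_cube n). (\<Sum>i<n. u i powr q) \<le> t}"

definition tau_half :: "nat \<Rightarrow> real \<Rightarrow> real" where
  "tau_half d q = (THE r. r \<ge> 0 \<and> sumpow_cdf d q (r powr q) = 1/2)"

definition psi :: "nat \<Rightarrow> real \<Rightarrow> real \<Rightarrow> real" where
  "psi d q l = sumpow_cdf (d - 1) q (tau_half d q powr q)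
             - sumpow_cdf (d - 1) q (tau_half d q powr q - l powr q)"

end

theory Submission
  imports Defs
begin

definition Lop :: "(real \<Rightarrow> ennreal) \<Rightarrow> real \<Rightarrow> ennreal" where
  "Lop g c = (\<integral>\<^sup>+v. g (c + v) * indicator {0..<1} v \<partial>lborel)"
definition Mop :: "(real \<Rightarrow> ennreal) \<Rightarrow> real \<Rightarrow> ennreal" where
  "Mop g c = (\<integral>\<^sup>+w. g (c + w/2) * indicator {0..<1} w \<partial>lborel)"

lemma half_affine:
  fixes f :: "real \<Rightarrow> ennreal"
  assumes [measurable]: "f \<in> borel_measurable borel"
  shows "(\<integral>\<^sup>+x. f x \<partial>lborel) = ennreal (1/2) * (\<integral>\<^sup>+x. f (t + x/2) \<partial>lborel)"
  using nn_integral_real_affine[of f "1/2" t] by simp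

lemma Lop_split:
  assumes [measurable]: "g \<in> borel_measurable borel"
  shows "Lop g c = ennreal (1/2) * Mop g c + ennreal (1/2) * Mop g (c + 1/2)"
proof -
  have ind: "\<And>v::real. indicator {0..<1} v = (indicator {0..<1/2} v + indicator {1/2..<1} v :: ennreal)"
    by (auto simp: indicator_def)
  have "Lop g c = (\<integral>\<^sup>+v. g (c + v) * indicator {0..<1/2} v + g (c + v) * indicator {1/2..<1} v \<partial>lborel)"
    unfolding Lop_def by (simp add: ind distrib_left)
  also have "\<dots> = (\<integral>\<^sup>+v. g (c + v) * indicator {0..<1/2} v \<partial>lborel) + (\<integral>\<^sup>+v. g (c + v) * indicator {1/2..<1} v \<partial>lborel)"
    by (rule nn_integral_add) auto
  also have "(\<integral>\<^sup>+v. g (c + v) * indicator {0..<1/2} v \<partial>lborel) = ennreal (1/2) * Mop g c"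
  proof -
    have "(\<integral>\<^sup>+v. g (c + v) * indicator {0..<1/2} v \<partial>lborel)
        = ennreal (1/2) * (\<integral>\<^sup>+x. g (c + (0 + x/2)) * indicator {0..<1/2} (0 + x/2) \<partial>lborel)"
      by (rule half_affine) measurable
    also have "(\<lambda>x::real. g (c + (0 + x/2)) * indicator {0..<1/2} (0 + x/2)) = (\<lambda>x. g (c + x/2) * indicator {0..<1} x)"
      by (auto simp: indicator_def fun_eq_iff)
    finally show ?thesis unfolding Mop_def .
  qed
  also have "(\<integral>\<^sup>+v. g (c + v) * indicator {1/2..<1} v \<partial>lborel) = ennreal (1/2) * Mop g (c + 1/2)"
  proof -
    have "(\<integral>\<^sup>+v. g (c + v) * indicator {1/2..<1} v \<partial>lborel)
        = ennreal (1/2) * (\<integral>\<^sup>+x. g (c + (1/2 + x/2)) * indicator {1/2..<1} (1/2 + x/2) \<partial>lborel)"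
      by (rule half_affine) measurable
    also have "(\<lambda>x::real. g (c + (1/2 + x/2)) * indicator {1/2..<1} (1/2 + x/2)) = (\<lambda>x. g (c + 1/2 + x/2) * indicator {0..<1} x)"
      by (auto simp: indicator_def fun_eq_iff add_ac)
    finally show ?thesis unfolding Mop_def .
  qed
  finally show ?thesis .
qed

lemma Lop_measurable[measurable]:
  assumes [measurable]: "g \<in> borel_measurable borel"
  shows "Lop g \<in> borel_measurable borel"
  unfolding Lop_def by measurable

lemma Mop_measurable[measurable]:
  assumes [measurable]: "g \<in> borel_measurable borel"
  shows "Mop g \<in> borel_measurable borel"
  unfolding Mop_def by measurable

lemma Mop_const: "Mop (\<lambda>_. K) c = K"
  unfolding Mop_def by (simp add: nn_integral_cmult)

definition Unif :: "real measure" where "Unif = uniform_measure lborel {0..1::real}"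

lemma sets_Unif[simp, measurable_cong]: "sets Unif = sets borel"
  by (simp add: Unif_def)
lemma space_Unif[simp]: "space Unif = UNIV"
  by (simp add: Unif_def)

lemma nn_integral_Unif:
  assumes [measurable]: "f \<in> borel_measurable borel"
  shows "(\<integral>\<^sup>+x. f x \<partial>Unif) = (\<integral>\<^sup>+x. f x * indicator {0..1} x \<partial>lborel)"
  unfolding Unif_def by (subst nn_integral_uniform_measure) (auto simp: divide_ennreal_def)

lemma prob_space_Unif: "prob_space Unif"
  unfolding Unif_def by (rule prob_space_uniform_measure) auto

definition wq :: "real \<Rightarrow> real \<Rightarrow> real" where "wq q y = min 1 (y powr (q - 1))"

lemma wq_measurable[measurable]: "wq q \<in> borel_measurable borel"
  unfolding wq_def by measurable

lemma wq_nonneg: "0 \<le> wq q y" and wq_le1: "wq q y \<le> 1"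
  by (auto simp: wq_def)

definition Top :: "real \<Rightarrow> (real \<Rightarrow> ennreal) \<Rightarrow> real \<Rightarrow> ennreal" where
  "Top q g c = (\<integral>\<^sup>+y. ennreal (wq q y) * g (c + y powr q) \<partial>Unif)"

lemma Top_measurable[measurable]:
  assumes [measurable]: "g \<in> borel_measurable borel"
  shows "Top q g \<in> borel_measurable borel"
proof -
  have "Top q g = (\<lambda>c. \<integral>\<^sup>+y. ennreal (wq q y) * g (c + y powr q) * indicator {0..1} y \<partial>lborel)"
    unfolding Top_def by (subst nn_integral_Unif) auto
  also have "\<dots> \<in> borel_measurable borel" by measurable
  finally show ?thesis .
qed

lemma Gq_deriv:
  assumes q: "q > 1" and x: "0 \<le> x"
  shows "((\<lambda>y::real. if y > 0 then y powr q else 0) has_real_derivative (q * x powr (q - 1))) (at x)"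
proof (cases "x = 0")
  case False
  with x have xp: "x > 0" by auto
  show ?thesis
  proof (rule has_field_derivative_transform_within_open[where S="{0<..}"])
    show "((\<lambda>y. y powr q) has_real_derivative (q * x powr (q - 1))) (at x)"
      using has_real_derivative_powr[OF xp] by simp
  qed (use xp in auto)
next
  case True
  have "((\<lambda>y. ((if y > 0 then y powr q else 0) - (if x > 0 then x powr q else 0)) / (y - x)) \<longlongrightarrow> 0) (at x)"
  proof (rule Lim_null_comparison)
    show "\<forall>\<^sub>F y in at x. norm (((if y > 0 then y powr q else 0) - (if x > 0 then x powr q else 0)) / (y - x)) \<le> \<bar>y\<bar> powr (q - 1)"
    proof (rule always_eventually, intro allI)
      fix y :: real
      show "norm (((if y > 0 then y powr q else 0) - (if x > 0 then x powr q else 0)) / (y - x)) \<le> \<bar>y\<bar> powr (q - 1)"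
      proof (cases "y > 0")
        case True
        have "y powr q / y = y powr (q - 1)" using True by (simp add: powr_diff)
        with True \<open>x = 0\<close> show ?thesis by simp
      qed (use \<open>x = 0\<close> in auto)
    qed
    have "((\<lambda>y. \<bar>y\<bar> powr (q - 1)) \<longlongrightarrow> \<bar>0\<bar> powr (q - 1)) (at x)"
      using q True by (intro tendsto_intros) auto
    then show "((\<lambda>y. \<bar>y\<bar> powr (q - 1)) \<longlongrightarrow> 0) (at x)" by simp
  qed
  then show ?thesis using True by (simp add: has_field_derivative_iff)
qed

lemma Top_eq:
  assumes q: "q \<ge> 1" and [measurable]: "g \<in> borel_measurable borel"
  shows "Top q g c = ennreal (1/q) * Lop g c"
proof -
  have "Top q g c = (\<integral>\<^sup>+y. ennreal (wq q y) * g (c + y powr q) * indicator {0..1} y \<partial>lborel)"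
    unfolding Top_def by (subst nn_integral_Unif) auto
  also have "\<dots> = (\<integral>\<^sup>+y. ennreal (y powr (q - 1)) * g (c + y powr q) * indicator {0..1} y \<partial>lborel)"
  proof (rule nn_integral_cong)
    fix y :: real
    show "ennreal (wq q y) * g (c + y powr q) * indicator {0..1} y = ennreal (y powr (q - 1)) * g (c + y powr q) * indicator {0..1} y"
    proof (cases "y \<in> {0..1}")
      case True
      then have "y powr (q - 1) \<le> 1" using q by (intro powr_le1) auto
      then show ?thesis by (simp add: wq_def)
    qed simp
  qed
  also have "\<dots> = ennreal (1/q) * (\<integral>\<^sup>+v. g (c + v) * indicator {0..1} v \<partial>lborel)"
  proof (cases "q = 1")
    case True
    have "(\<integral>\<^sup>+y. ennreal (y powr (q - 1)) * g (c + y powr q) * indicator {0..1} y \<partial>lborel)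
        = (\<integral>\<^sup>+v. g (c + v) * indicator {0..1} v \<partial>lborel)"
    proof (rule nn_integral_cong_AE)
      have "AE y in lborel. y \<noteq> 0" by (rule AE_lborel_singleton)
      then show "AE y in lborel. ennreal (y powr (q - 1)) * g (c + y powr q) * indicator {0..1} y = g (c + y) * indicator {0..1} y"
        by eventually_elim (auto simp: True indicator_def)
    qed
    then show ?thesis using True by simp
  next
    case False
    with q have q1: "q > 1" by simp
    let ?G = "\<lambda>y::real. if y > 0 then y powr q else 0"
    have "(\<integral>\<^sup>+v. g (c + v) * indicator {?G 0..?G 1} v \<partial>lborel)
        = (\<integral>\<^sup>+x. g (c + ?G x) * ennreal (q * x powr (q - 1)) * indicator {0..1} x \<partial>lborel)"
    proof (rule nn_integral_substitution_aux)
      show "(\<lambda>v. g (c + v)) \<in> borel_measurable borel" by measurable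
      show "\<And>x. x \<in> {0..1} \<Longrightarrow> (?G has_real_derivative q * x powr (q - 1)) (at x)"
        using Gq_deriv[OF q1] by auto
      show "continuous_on {0..1} (\<lambda>x::real. q * x powr (q - 1))"
        using q1 by (intro continuous_intros continuous_on_powr') auto
      show "\<And>x. x \<in> {0..1::real} \<Longrightarrow> 0 \<le> q * x powr (q - 1)" using q1 by auto
    qed auto
    also have "\<dots> = (\<integral>\<^sup>+x. ennreal q * (ennreal (x powr (q - 1)) * g (c + x powr q) * indicator {0..1} x) \<partial>lborel)"
      by (intro nn_integral_cong) (use q1 in \<open>auto simp: indicator_def ennreal_mult mult_ac\<close>)
    also have "\<dots> = ennreal q * (\<integral>\<^sup>+x. ennreal (x powr (q - 1)) * g (c + x powr q) * indicator {0..1} x \<partial>lborel)"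
      by (rule nn_integral_cmult) measurable
    finally have eq: "(\<integral>\<^sup>+v. g (c + v) * indicator {0..1} v \<partial>lborel)
        = ennreal q * (\<integral>\<^sup>+x. ennreal (x powr (q - 1)) * g (c + x powr q) * indicator {0..1} x \<partial>lborel)"
      by simp
    have "ennreal (1/q) * ennreal q = 1" using q1
      by (simp add: ennreal_mult'[symmetric])
    then show ?thesis unfolding eq by (simp add: mult.assoc[symmetric])
  qed
  also have "(\<integral>\<^sup>+v. g (c + v) * indicator {0..1} v \<partial>lborel) = Lop g c"
    unfolding Lop_def
  proof (rule nn_integral_cong_AE)
    have "AE y in lborel. y \<noteq> 1" by (rule AE_lborel_singleton)
    then show "AE v in lborel. g (c + v) * indicator {0..1} v = g (c + v) * indicator {0..<1} v"
      by eventually_elim (auto simp: indicator_def)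
  qed
  finally show ?thesis .
qed

lemma pascal_sum:
  fixes a :: "nat \<Rightarrow> 'a::comm_semiring_1"
  shows "(\<Sum>j\<le>k. of_nat (k choose j) * (a j + a (Suc j))) = (\<Sum>j\<le>Suc k. of_nat (Suc k choose j) * a j)"
proof -
  let ?X = "\<Sum>j\<le>k. of_nat (k choose j) * a (Suc j)"
  let ?Y = "\<Sum>j\<le>k. of_nat (k choose Suc j) * a (Suc j)"
  let ?Z = "\<Sum>j\<le>k. of_nat (k choose j) * a j"
  have A: "(\<Sum>j\<le>Suc k. of_nat (Suc k choose j) * a j) = a 0 + ?X + ?Y"
  proof -
    have "(\<Sum>j\<le>Suc k. of_nat (Suc k choose j) * a j) = a 0 + (\<Sum>j\<le>k. of_nat (Suc k choose Suc j) * a (Suc j))"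
      by (subst sum.atMost_Suc_shift) simp
    also have "\<dots> = a 0 + ?X + ?Y"
      by (simp add: sum.distrib distrib_right add_ac)
    finally show ?thesis .
  qed
  have B: "a 0 + ?Y = ?Z"
  proof (cases k)
    case 0 then show ?thesis by simp
  next
    case (Suc k')
    have h1: "?Z = a 0 + (\<Sum>j\<le>k'. of_nat (k choose Suc j) * a (Suc j))"
      unfolding Suc by (subst sum.atMost_Suc_shift) simp
    have h2: "?Y = (\<Sum>j\<le>k'. of_nat (k choose Suc j) * a (Suc j))"
      unfolding Suc sum.atMost_Suc by (simp add: binomial_eq_0 del: binomial_Suc_Suc)
    show ?thesis using h1 h2 by simp
  qed
  have C: "(\<Sum>j\<le>k. of_nat (k choose j) * (a j + a (Suc j))) = ?Z + ?X"
    by (simp add: sum.distrib distrib_left)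
  have "a 0 + ?X + ?Y = (a 0 + ?Y) + ?X" by (simp add: add_ac)
  then show ?thesis using A B C by simp
qed

lemma funpow_measurable:
  fixes F :: "(real \<Rightarrow> ennreal) \<Rightarrow> (real \<Rightarrow> ennreal)"
  assumes "\<And>g. g \<in> borel_measurable borel \<Longrightarrow> F g \<in> borel_measurable borel"
    and "g \<in> borel_measurable borel"
  shows "(F ^^ k) g \<in> borel_measurable borel"
  by (induction k) (simp_all add: assms)

lemma Lop_pow_measurable[measurable]: "g \<in> borel_measurable borel \<Longrightarrow> (Lop ^^ k) g \<in> borel_measurable borel"
  by (rule funpow_measurable) auto
lemma Mop_pow_measurable[measurable]: "g \<in> borel_measurable borel \<Longrightarrow> (Mop ^^ k) g \<in> borel_measurable borel"
  by (rule funpow_measurable) auto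
lemma Top_pow_measurable[measurable]: "g \<in> borel_measurable borel \<Longrightarrow> (Top q ^^ k) g \<in> borel_measurable borel"
  by (rule funpow_measurable) auto

lemma Lop_cmult:
  assumes [measurable]: "f \<in> borel_measurable borel"
  shows "Lop (\<lambda>x. K * f x) c = K * Lop f c"
  unfolding Lop_def by (subst nn_integral_cmult[symmetric]) (auto simp: mult_ac)

lemma Lop_sum:
  assumes [measurable]: "\<And>j. j \<in> S \<Longrightarrow> f j \<in> borel_measurable borel"
  shows "Lop (\<lambda>x. \<Sum>j\<in>S. f j x) c = (\<Sum>j\<in>S. Lop (f j) c)"
  unfolding Lop_def by (subst nn_integral_sum[symmetric]) (auto simp: sum_distrib_right)

lemma Lk_expand:
  assumes [measurable]: "g \<in> borel_measurable borel"
  shows "(Lop ^^ k) g c = ennreal ((1/2)^k) * (\<Sum>j\<le>k. of_nat (k choose j) * (Mop ^^ k) g (c + real j / 2))"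
proof (induction k arbitrary: c)
  case 0 then show ?case by simp
next
  case (Suc k)
  let ?A = "\<lambda>j. (Mop ^^ Suc k) g (c + real j / 2)"
  have IH: "(Lop ^^ k) g = (\<lambda>x. ennreal ((1/2)^k) * (\<Sum>j\<le>k. of_nat (k choose j) * (Mop ^^ k) g (x + real j / 2)))"
    using Suc by auto
  have sh: "Lop (\<lambda>x. (Mop ^^ k) g (x + real j / 2)) c = ennreal (1/2) * (?A j + ?A (Suc j))" for j
  proof -
    have "Lop (\<lambda>x. (Mop ^^ k) g (x + real j / 2)) c
       = ennreal (1/2) * Mop (\<lambda>x. (Mop ^^ k) g (x + real j / 2)) c + ennreal (1/2) * Mop (\<lambda>x. (Mop ^^ k) g (x + real j / 2)) (c + 1/2)"
      by (rule Lop_split) measurable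
    moreover have "Mop (\<lambda>x. (Mop ^^ k) g (x + real j / 2)) y = (Mop ^^ Suc k) g (y + real j / 2)" for y
      by (simp add: Mop_def add_ac)
    moreover have "c + 1/2 + real j / 2 = c + real (Suc j) / 2" by (simp add: field_simps)
    ultimately show ?thesis by (simp add: distrib_left)
  qed
  have "(Lop ^^ Suc k) g c = Lop ((Lop ^^ k) g) c" by simp
  also have "\<dots> = ennreal ((1/2)^k) * (\<Sum>j\<le>k. of_nat (k choose j) * Lop (\<lambda>x. (Mop ^^ k) g (x + real j / 2)) c)"
  proof -
    have m1: "(\<lambda>x. \<Sum>j\<le>k. of_nat (k choose j) * (Mop ^^ k) g (x + real j / 2)) \<in> borel_measurable borel"
      by measurable
    have "Lop ((Lop ^^ k) g) c = ennreal ((1/2)^k) * Lop (\<lambda>x. \<Sum>j\<le>k. of_nat (k choose j) * (Mop ^^ k) g (x + real j / 2)) c"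
      unfolding IH by (rule Lop_cmult[OF m1])
    also have "Lop (\<lambda>x. \<Sum>j\<le>k. of_nat (k choose j) * (Mop ^^ k) g (x + real j / 2)) c
       = (\<Sum>j\<le>k. Lop (\<lambda>x. of_nat (k choose j) * (Mop ^^ k) g (x + real j / 2)) c)"
      by (rule Lop_sum) measurable
    also have "\<dots> = (\<Sum>j\<le>k. of_nat (k choose j) * Lop (\<lambda>x. (Mop ^^ k) g (x + real j / 2)) c)"
      by (intro sum.cong refl Lop_cmult) measurable
    finally show ?thesis .
  qed
  also have "\<dots> = ennreal ((1/2)^k) * ennreal (1/2) * (\<Sum>j\<le>k. of_nat (k choose j) * (?A j + ?A (Suc j)))"
    unfolding sh by (simp add: sum_distrib_left mult_ac)
  also have "\<dots> = ennreal ((1/2)^Suc k) * (\<Sum>j\<le>Suc k. of_nat (Suc k choose j) * ?A j)"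
  proof -
    have "ennreal ((1/2)^k) * ennreal (1/2) = ennreal ((1/2)^Suc k)"
      by (subst ennreal_mult[symmetric]; simp add: mult.commute)
    then show ?thesis by (subst pascal_sum) (simp only: mult.assoc[symmetric])
  qed
  finally show ?case .
qed

lemma Top_pow_eq:
  assumes q: "q \<ge> 1" and [measurable]: "g \<in> borel_measurable borel"
  shows "(Top q ^^ k) g c = ennreal ((1/q)^k) * (Lop ^^ k) g c"
proof (induction k arbitrary: c)
  case 0 then show ?case by simp
next
  case (Suc k)
  have IH: "(Top q ^^ k) g = (\<lambda>x. ennreal ((1/q)^k) * (Lop ^^ k) g x)" using Suc by auto
  have "(Top q ^^ Suc k) g c = Top q ((Top q ^^ k) g) c" by simp
  also have "\<dots> = ennreal (1/q) * Lop ((Top q ^^ k) g) c" by (rule Top_eq[OF q]) measurable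
  also have "\<dots> = ennreal (1/q) * (ennreal ((1/q)^k) * (Lop ^^ Suc k) g c)"
    unfolding IH by (subst Lop_cmult) auto
  also have "\<dots> = ennreal ((1/q)^Suc k) * (Lop ^^ Suc k) g c"
  proof -
    have "ennreal (1/q) * ennreal ((1/q)^k) = ennreal ((1/q)^Suc k)"
      using q by (simp add: ennreal_mult[symmetric] mult_ac)
    then show ?thesis by (simp only: mult.assoc[symmetric])
  qed
  finally show ?case .
qed

lemma Mk_bound:
  assumes "finite S" and [measurable]: "G \<in> borel_measurable borel"
    and "\<And>x. (\<Sum>j\<in>S. a j * G (x + s j)) \<le> K"
  shows "(\<Sum>j\<in>S. a j * (Mop ^^ m) G (c + s j)) \<le> K"
  using assms(2,3)
proof (induction m arbitrary: G c)
  case 0 then show ?case by simp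
next
  case (Suc m)
  note Suc.prems(1)[measurable]
  have "(\<Sum>j\<in>S. a j * Mop G (x + s j)) \<le> K" for x
  proof -
    have e: "a j * Mop G (x + s j) = (\<integral>\<^sup>+w. a j * (G (x + w/2 + s j) * indicator {0..<1} w) \<partial>lborel)" for j
    proof -
      have "(\<lambda>w. G (x + w/2 + s j) * indicator {0..<1} w) \<in> borel_measurable borel" by measurable
      then show ?thesis by (simp add: Mop_def nn_integral_cmult add_ac)
    qed
    have "(\<Sum>j\<in>S. a j * Mop G (x + s j)) = (\<Sum>j\<in>S. \<integral>\<^sup>+w. a j * (G (x + w/2 + s j) * indicator {0..<1} w) \<partial>lborel)"
      using e by simp
    also have "\<dots> = (\<integral>\<^sup>+w. (\<Sum>j\<in>S. a j * (G (x + w/2 + s j) * indicator {0..<1} w)) \<partial>lborel)"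
      by (rule nn_integral_sum[symmetric]) measurable
    also have "\<dots> = (\<integral>\<^sup>+w. (\<Sum>j\<in>S. a j * G ((x + w/2) + s j)) * indicator {0..<1} w \<partial>lborel)"
      by (rule nn_integral_cong) (simp add: sum_distrib_right mult.assoc)
    also have "\<dots> \<le> (\<integral>\<^sup>+w. K * indicator {0..<1::real} w \<partial>lborel)"
    proof (rule nn_integral_mono)
      fix w :: real
      have "(\<Sum>j\<in>S. a j * G ((x + w/2) + s j)) \<le> K" by (rule Suc.prems(2))
      then show "(\<Sum>j\<in>S. a j * G ((x + w/2) + s j)) * indicator {0..<1} w \<le> K * indicator {0..<1} w"
        by (rule mult_right_mono) simp
    qed
    also have "\<dots> = K" by (simp add: nn_integral_cmult)
    finally show ?thesis .
  qed
  then have "(\<Sum>j\<in>S. a j * (Mop ^^ m) (Mop G) (c + s j)) \<le> K"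
    by (intro Suc.IH) auto
  then show ?case by (simp add: funpow_Suc_right del: funpow.simps)
qed

lemma sum_ind_le1: "(\<Sum>j\<le>k. indicator {real j..<real j + 1} u) \<le> (1::ennreal)"
proof -
  have "(\<Sum>j\<le>k. indicator {real j..<real j + 1} u) = (\<Sum>j\<le>k. if j = nat \<lfloor>u\<rfloor> then indicator {real j..<real j + 1} u else (0::ennreal))"
  proof (rule sum.cong)
    fix j assume "j \<in> {..k}"
    show "indicator {real j..<real j + 1} u = (if j = nat \<lfloor>u\<rfloor> then indicator {real j..<real j + 1} u else (0::ennreal))"
    proof (cases "u \<in> {real j..<real j + 1}")
      case True
      then have "\<lfloor>u\<rfloor> = int j" by (simp add: floor_eq_iff)
      then show ?thesis by simp
    qed (auto simp: indicator_def)
  qed simp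
  also have "\<dots> \<le> 1" by (simp add: sum.delta indicator_def)
  finally show ?thesis .
qed

lemma Mop_ind_sum:
  assumes ab: "a \<le> b"
  shows "(\<Sum>j\<le>k. Mop (indicator {a<..b}) (x + real j / 2)) \<le> ennreal (2 * (b - a))"
proof -
  define f where "f u = (indicator {a<..b} (x + u/2) :: ennreal)" for u :: real
  have fm[measurable]: "f \<in> borel_measurable borel" unfolding f_def by measurable
  have e: "Mop (indicator {a<..b}) (x + real j / 2) = (\<integral>\<^sup>+u. f u * indicator {real j..<real j + 1} u \<partial>lborel)" for j
  proof -
    have "(\<integral>\<^sup>+u. f u * indicator {real j..<real j + 1} u \<partial>lborel)
        = (\<integral>\<^sup>+w. f (real j + w) * indicator {real j..<real j + 1} (real j + w) \<partial>lborel)"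
      using nn_integral_real_affine[of "\<lambda>u. f u * indicator {real j..<real j + 1} u" 1 "real j"] by simp
    also have "\<dots> = Mop (indicator {a<..b}) (x + real j / 2)"
      unfolding Mop_def f_def by (auto intro!: nn_integral_cong simp: indicator_def add_divide_distrib add_ac)
    finally show ?thesis by simp
  qed
  have "(\<Sum>j\<le>k. Mop (indicator {a<..b}) (x + real j / 2)) = (\<Sum>j\<le>k. \<integral>\<^sup>+u. f u * indicator {real j..<real j + 1} u \<partial>lborel)"
    using e by simp
  also have "\<dots> = (\<integral>\<^sup>+u. (\<Sum>j\<le>k. f u * indicator {real j..<real j + 1} u) \<partial>lborel)"
    by (rule nn_integral_sum[symmetric]) measurable
  also have "\<dots> \<le> (\<integral>\<^sup>+u. f u \<partial>lborel)"
  proof (rule nn_integral_mono)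
    fix u :: real
    have "(\<Sum>j\<le>k. f u * indicator {real j..<real j + 1} u) = f u * (\<Sum>j\<le>k. indicator {real j..<real j + 1} u)"
      by (simp add: sum_distrib_left)
    also have "\<dots> \<le> f u * 1" by (intro mult_left_mono sum_ind_le1) auto
    finally show "(\<Sum>j\<le>k. f u * indicator {real j..<real j + 1} u) \<le> f u" by simp
  qed
  also have "(\<integral>\<^sup>+u. f u \<partial>lborel) = ennreal (2 * (b - a))"
  proof -
    have "(\<integral>\<^sup>+u. indicator {a<..b} u \<partial>lborel) = ennreal (1/2) * (\<integral>\<^sup>+u. indicator {a<..b} (x + u/2) \<partial>lborel)"
      by (rule half_affine) measurable
    then have "ennreal (b - a) = ennreal (1/2) * (\<integral>\<^sup>+u. f u \<partial>lborel)"
      using ab by (simp add: f_def)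
    then have "ennreal 2 * ennreal (b - a) = (ennreal 2 * ennreal (1/2)) * (\<integral>\<^sup>+u. f u \<partial>lborel)"
      by (simp add: mult.assoc)
    also have "ennreal 2 * ennreal (1/2) = 1" by (subst ennreal_mult[symmetric]; simp)
    finally have "ennreal 2 * ennreal (b - a) = (\<integral>\<^sup>+u. f u \<partial>lborel)" by simp
    moreover have "ennreal 2 * ennreal (b - a) = ennreal (2 * (b - a))"
      using ab by (subst ennreal_mult[symmetric]) auto
    ultimately show ?thesis by simp
  qed
  finally show ?thesis .
qed

lemma Lk_le1:
  assumes [measurable]: "g \<in> borel_measurable borel" and "\<And>x. g x \<le> 1"
  shows "(Lop ^^ k) g c \<le> 1"
proof (induction k arbitrary: c)
  case 0 then show ?case using assms by simp
next
  case (Suc k)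
  have "(Lop ^^ Suc k) g c = (\<integral>\<^sup>+v. (Lop ^^ k) g (c + v) * indicator {0..<1} v \<partial>lborel)"
    by (simp add: Lop_def)
  also have "\<dots> \<le> (\<integral>\<^sup>+v. 1 * indicator {0..<1::real} v \<partial>lborel)"
    by (intro nn_integral_mono mult_right_mono Suc.IH) auto
  also have "\<dots> = 1" by simp
  finally show ?case .
qed

lemma Lk_ind_bound:
  assumes ab: "a \<le> b" and k: "k \<ge> 1"
  shows "(Lop ^^ k) (indicator {a<..b}) c \<le> ennreal ((1/2)^k * real (k choose (k div 2)) * (2 * (b - a)))"
proof -
  obtain m where km: "k = Suc m" using k by (cases k) auto
  let ?G = "Mop (indicator {a<..b})"
  have Gm[measurable]: "?G \<in> borel_measurable borel" by measurable
  have "(\<Sum>j\<le>k. of_nat (k choose j) * (Mop ^^ m) ?G (c + real j / 2)) \<le> of_nat (k choose (k div 2)) * ennreal (2 * (b - a))"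
  proof (rule Mk_bound)
    fix x
    have "(\<Sum>j\<le>k. of_nat (k choose j) * ?G (x + real j / 2)) \<le> (\<Sum>j\<le>k. of_nat (k choose (k div 2)) * ?G (x + real j / 2))"
      by (intro sum_mono mult_right_mono) (auto simp: binomial_maximum)
    also have "\<dots> = of_nat (k choose (k div 2)) * (\<Sum>j\<le>k. ?G (x + real j / 2))"
      by (simp add: sum_distrib_left)
    also have "\<dots> \<le> of_nat (k choose (k div 2)) * ennreal (2 * (b - a))"
      by (intro mult_left_mono Mop_ind_sum ab) auto
    finally show "(\<Sum>j\<le>k. of_nat (k choose j) * ?G (x + real j / 2)) \<le> of_nat (k choose (k div 2)) * ennreal (2 * (b - a))" .
  qed auto
  moreover have "(Mop ^^ k) (indicator {a<..b}) = (Mop ^^ m) ?G"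
    unfolding km by (simp add: funpow_Suc_right del: funpow.simps)
  ultimately have "(\<Sum>j\<le>k. of_nat (k choose j) * (Mop ^^ k) (indicator {a<..b}) (c + real j / 2)) \<le> of_nat (k choose (k div 2)) * ennreal (2 * (b - a))"
    by simp
  then have "(Lop ^^ k) (indicator {a<..b}) c \<le> ennreal ((1/2)^k) * (of_nat (k choose (k div 2)) * ennreal (2 * (b - a)))"
    by (subst Lk_expand) (auto intro: mult_left_mono)
  also have "\<dots> = ennreal ((1/2)^k * real (k choose (k div 2)) * (2 * (b - a)))"
    using ab by (simp add: ennreal_mult ennreal_of_nat_eq_real_of_nat mult.assoc)
  finally show ?thesis .
qed

lemma cb_rec2: "(Suc (Suc (2*m)) choose Suc m) = 2 * (Suc (2*m) choose m)"
proof -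
  have a: "Suc (Suc (2*m)) * (Suc (2*m) choose m) = (Suc (Suc (2*m)) choose Suc m) * Suc m"
    by (rule Suc_times_binomial_eq)
  have "Suc (Suc (2*m)) = 2 * Suc m" by simp
  with a have "2 * (Suc (2*m) choose m) * Suc m = (Suc (Suc (2*m)) choose Suc m) * Suc m"
    by (simp add: mult_ac del: binomial_Suc_Suc)
  then show ?thesis by (simp only: mult_cancel2) simp
qed

lemma cb_rec1: "(Suc (Suc (2*m)) choose Suc m) * Suc m = 2 * ((2*m + 1) * ((2*m) choose m))"
proof -
  have b: "Suc (2*m) * ((2*m) choose m) = (Suc (2*m) choose Suc m) * Suc m"
    by (rule Suc_times_binomial_eq)
  have c: "(Suc (2*m) choose Suc m) = (Suc (2*m) choose m)"
    using binomial_symmetric[of "Suc m" "Suc (2*m)"] by simp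
  have "(Suc (Suc (2*m)) choose Suc m) * Suc m = 2 * ((Suc (2*m) choose m) * Suc m)"
    unfolding cb_rec2 by (simp del: binomial_Suc_Suc)
  also have "\<dots> = 2 * (Suc (2*m) * ((2*m) choose m))" using b c by (simp del: binomial_Suc_Suc)
  finally show ?thesis by simp
qed

lemma cb_even: "real ((2*m) choose m)^2 * (3 * real m + 1) \<le> 16^m"
proof (induction m)
  case 0 then show ?case by simp
next
  case (Suc m)
  define c where "c = real ((2*m) choose m)"
  define d where "d = real (Suc (Suc (2*m)) choose Suc m)"
  have "real ((Suc (Suc (2*m)) choose Suc m) * Suc m) = real (2 * ((2*m + 1) * ((2*m) choose m)))"
    by (simp only: cb_rec1)
  then have rel: "d * (real m + 1) = 2 * (2 * real m + 1) * c"
    unfolding c_def d_def by (simp only: of_nat_mult of_nat_Suc of_nat_add) (simp add: algebra_simps)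
  have IH: "c^2 * (3 * real m + 1) \<le> 16^m" using Suc.IH unfolding c_def .
  have poly: "4 * (2 * real m + 1)^2 * (3 * real m + 4) \<le> 16 * (real m + 1)^2 * (3 * real m + 1)"
    by (simp add: power2_eq_square algebra_simps)
  have "d^2 * (3 * real (Suc m) + 1) * (real m + 1)^2 = (d * (real m + 1))^2 * (3 * real m + 4)"
    by (simp add: power2_eq_square algebra_simps)
  also have "\<dots> = 4 * (2 * real m + 1)^2 * (3 * real m + 4) * c^2"
    unfolding rel by (simp add: power2_eq_square algebra_simps)
  also have "\<dots> \<le> 16 * (real m + 1)^2 * (3 * real m + 1) * c^2"
    by (intro mult_right_mono poly) auto
  also have "\<dots> = 16 * (real m + 1)^2 * (c^2 * (3 * real m + 1))" by (simp add: algebra_simps)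
  also have "\<dots> \<le> 16 * (real m + 1)^2 * 16^m"
    by (intro mult_left_mono IH) auto
  finally have "d^2 * (3 * real (Suc m) + 1) * (real m + 1)^2 \<le> 16^Suc m * (real m + 1)^2"
    by (simp add: algebra_simps)
  then have "d^2 * (3 * real (Suc m) + 1) \<le> 16^Suc m"
    by (rule mult_right_le_imp_le) auto
  moreover have "2 * Suc m = Suc (Suc (2*m))" by simp
  ultimately show ?case unfolding d_def by simp
qed

lemma cb_bound: "real (k choose (k div 2))^2 * (real k + 1) \<le> 4^k"
proof (cases "even k")
  case True
  then obtain m where k: "k = 2*m" by (auto elim: evenE)
  have "real ((2*m) choose m)^2 * (2 * real m + 1) \<le> real ((2*m) choose m)^2 * (3 * real m + 1)"
    by (intro mult_left_mono) auto
  also have "\<dots> \<le> 16^m" by (rule cb_even)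
  also have "(16::real)^m = 4^(2*m)" by (simp add: power_mult)
  finally show ?thesis unfolding k by simp
next
  case False
  then obtain m where k: "k = Suc (2*m)" by (metis oddE Suc_eq_plus1)
  have kd: "k div 2 = m" unfolding k by simp
  define e where "e = real (Suc (2*m) choose m)"
  have "real ((2 * Suc m) choose Suc m) = 2 * e"
  proof -
    have "2 * Suc m = Suc (Suc (2*m))" by simp
    then show ?thesis unfolding e_def using cb_rec2[of m] by simp
  qed
  moreover have "real ((2 * Suc m) choose Suc m)^2 * (3 * real (Suc m) + 1) \<le> 16^Suc m" by (rule cb_even)
  ultimately have A: "4 * e^2 * (3 * real m + 4) \<le> 16 * 16^m"
    by (simp add: power2_eq_square algebra_simps)
  have "e^2 * (real k + 1) * (3 * real m + 4) = e^2 * (3 * real m + 4) * (2 * real m + 2)"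
    unfolding k by (simp add: algebra_simps)
  also have "\<dots> \<le> 4 * 16^m * (2 * real m + 2)"
    using A by (intro mult_right_mono) auto
  also have "\<dots> \<le> 4 * 16^m * (3 * real m + 4)"
    by (intro mult_left_mono) auto
  finally have "e^2 * (real k + 1) \<le> 4 * 16^m"
    by (rule mult_right_le_imp_le) auto
  also have "4 * (16::real)^m = 4^k" unfolding k by (simp add: power_mult)
  finally show ?thesis unfolding kd e_def k by simp
qed

lemma cb_ratio: "(1/2)^k * real (k choose (k div 2)) \<le> 1 / sqrt (real k + 1)"
proof -
  define x where "x = (1/2)^k * real (k choose (k div 2))"
  have x0: "x \<ge> 0" unfolding x_def by simp
  have q4: "((1/2::real)^k)^2 = (1/4)^k"
    by (simp add: power2_eq_square power_mult_distrib[symmetric])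
  have "x^2 * (real k + 1) = ((1/2)^k)^2 * (real (k choose (k div 2))^2 * (real k + 1))"
    unfolding x_def by (simp add: power_mult_distrib mult_ac)
  also have "\<dots> = (1/4)^k * (real (k choose (k div 2))^2 * (real k + 1))" by (simp only: q4)
  also have "\<dots> \<le> (1/4)^k * 4^k" by (intro mult_left_mono cb_bound) auto
  also have "\<dots> = 1" by (simp add: power_mult_distrib[symmetric])
  finally have "x^2 * (real k + 1) \<le> 1" .
  then have "(x * sqrt (real k + 1))^2 \<le> 1^2" by (simp add: power_mult_distrib)
  then have "x * sqrt (real k + 1) \<le> 1"
    by (rule power2_le_imp_le) simp
  then show ?thesis unfolding x_def[symmetric] by (simp add: field_simps)
qed

lemma psf: "product_sigma_finite (\<lambda>_::nat. Unif)"
  unfolding product_sigma_finite_def using prob_space_Unif by (simp add: prob_space_imp_sigma_finite)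

lemma TA:
  assumes "finite A" and [measurable]: "g \<in> borel_measurable borel"
  shows "(\<integral>\<^sup>+x. g (c + (\<Sum>i\<in>A. x i powr q)) * (\<Prod>i\<in>A. ennreal (wq q (x i))) \<partial>PiM A (\<lambda>_::nat. Unif))
         = (Top q ^^ card A) g c"
  using assms(1)
proof (induction A arbitrary: c rule: finite_induct)
  case empty
  show ?case by (simp add: PiM_empty)
next
  case (insert i A)
  note fin = insert.hyps(1) and iA = insert.hyps(2)
  have "(\<integral>\<^sup>+x. g (c + (\<Sum>j\<in>insert i A. x j powr q)) * (\<Prod>j\<in>insert i A. ennreal (wq q (x j))) \<partial>PiM (insert i A) (\<lambda>_. Unif))
     = (\<integral>\<^sup>+y. (\<integral>\<^sup>+x. g (c + (\<Sum>j\<in>insert i A. (x(i := y)) j powr q)) * (\<Prod>j\<in>insert i A. ennreal (wq q ((x(i := y)) j))) \<partial>PiM A (\<lambda>_. Unif)) \<partial>Unif)"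
    by (rule product_sigma_finite.product_nn_integral_insert_rev[OF psf fin iA]) measurable
  also have "\<dots> = (\<integral>\<^sup>+y. ennreal (wq q y) * (\<integral>\<^sup>+x. g ((c + y powr q) + (\<Sum>j\<in>A. x j powr q)) * (\<Prod>j\<in>A. ennreal (wq q (x j))) \<partial>PiM A (\<lambda>_. Unif)) \<partial>Unif)"
  proof (rule nn_integral_cong)
    fix y
    have e1: "(\<Sum>j\<in>insert i A. (x(i := y)) j powr q) = y powr q + (\<Sum>j\<in>A. x j powr q)" for x :: "nat \<Rightarrow> real"
      using fin iA by (simp add: sum.insert) (intro sum.cong, auto)
    have e2: "(\<Prod>j\<in>insert i A. ennreal (wq q ((x(i := y)) j))) = ennreal (wq q y) * (\<Prod>j\<in>A. ennreal (wq q (x j)))" for x :: "nat \<Rightarrow> real"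
    proof -
      have "(\<Prod>j\<in>A. ennreal (wq q ((x(i := y)) j))) = (\<Prod>j\<in>A. ennreal (wq q (x j)))"
        using iA by (intro prod.cong) auto
      then show ?thesis using fin iA by (simp add: prod.insert)
    qed
    have "(\<integral>\<^sup>+x. g (c + (\<Sum>j\<in>insert i A. (x(i := y)) j powr q)) * (\<Prod>j\<in>insert i A. ennreal (wq q ((x(i := y)) j))) \<partial>PiM A (\<lambda>_. Unif))
      = (\<integral>\<^sup>+x. ennreal (wq q y) * (g ((c + y powr q) + (\<Sum>j\<in>A. x j powr q)) * (\<Prod>j\<in>A. ennreal (wq q (x j)))) \<partial>PiM A (\<lambda>_. Unif))"
      unfolding e1 e2 by (simp add: add_ac mult_ac)
    also have "\<dots> = ennreal (wq q y) * (\<integral>\<^sup>+x. g ((c + y powr q) + (\<Sum>j\<in>A. x j powr q)) * (\<Prod>j\<in>A. ennreal (wq q (x j))) \<partial>PiM A (\<lambda>_. Unif))"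
      by (rule nn_integral_cmult) measurable
    finally show "(\<integral>\<^sup>+x. g (c + (\<Sum>j\<in>insert i A. (x(i := y)) j powr q)) * (\<Prod>j\<in>insert i A. ennreal (wq q ((x(i := y)) j))) \<partial>PiM A (\<lambda>_. Unif))
      = ennreal (wq q y) * (\<integral>\<^sup>+x. g ((c + y powr q) + (\<Sum>j\<in>A. x j powr q)) * (\<Prod>j\<in>A. ennreal (wq q (x j))) \<partial>PiM A (\<lambda>_. Unif))" .
  qed
  also have "\<dots> = (\<integral>\<^sup>+y. ennreal (wq q y) * (Top q ^^ card A) g (c + y powr q) \<partial>Unif)"
    by (simp only: insert.IH)
  also have "\<dots> = (Top q ^^ card (insert i A)) g c"
    using fin iA by (simp add: Top_def)
  finally show ?case .
qed

definition beta :: "real \<Rightarrow> nat \<Rightarrow> real" where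
  "beta h k = (if k = 0 then 1 else min 1 (2 * h / sqrt (real k + 1)))"

lemma beta_nonneg: "h \<ge> 0 \<Longrightarrow> beta h k \<ge> 0"
  by (simp add: beta_def)

lemma Phi_bound:
  assumes q: "q \<ge> 1" and ab: "a \<le> b"
  shows "(Top q ^^ k) (indicator {a<..b}) c \<le> ennreal ((1/q)^k * beta (b - a) k)"
proof -
  have m[measurable]: "(indicator {a<..b} :: real \<Rightarrow> ennreal) \<in> borel_measurable borel" by measurable
  have L1: "(Lop ^^ k) (indicator {a<..b}) c \<le> 1"
    by (rule Lk_le1) (auto simp: indicator_def)
  have L2: "(Lop ^^ k) (indicator {a<..b}) c \<le> ennreal (2 * (b - a) / sqrt (real k + 1))" if "k \<ge> 1"
  proof -
    have "(Lop ^^ k) (indicator {a<..b}) c \<le> ennreal ((1/2)^k * real (k choose (k div 2)) * (2 * (b - a)))"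
      by (rule Lk_ind_bound[OF ab that])
    also have "(1/2)^k * real (k choose (k div 2)) * (2 * (b - a)) \<le> 1 / sqrt (real k + 1) * (2 * (b - a))"
      using ab by (intro mult_right_mono cb_ratio) auto
    finally show ?thesis by (simp add: ennreal_leI order_trans)
  qed
  have L: "(Lop ^^ k) (indicator {a<..b}) c \<le> ennreal (beta (b - a) k)"
  proof (cases "k = 0")
    case True then show ?thesis using L1 by (simp add: beta_def)
  next
    case False
    then have "(Lop ^^ k) (indicator {a<..b}) c \<le> min (ennreal 1) (ennreal (2 * (b - a) / sqrt (real k + 1)))"
      using L1 L2 by simp
    also have "\<dots> = ennreal (beta (b - a) k)"
      using False ab by (subst min_ennreal) (auto simp: beta_def)
    finally show ?thesis .
  qed
  have "(Top q ^^ k) (indicator {a<..b}) c = ennreal ((1/q)^k) * (Lop ^^ k) (indicator {a<..b}) c"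
    by (rule Top_pow_eq[OF q]) measurable
  also have "\<dots> \<le> ennreal ((1/q)^k) * ennreal (beta (b - a) k)"
    by (intro mult_left_mono L) auto
  also have "\<dots> = ennreal ((1/q)^k * beta (b - a) k)"
    using q ab by (simp add: ennreal_mult beta_nonneg)
  finally show ?thesis .
qed

lemma int_1mw:
  assumes q: "q \<ge> 1"
  shows "(\<integral>\<^sup>+y. ennreal (1 - wq q y) \<partial>Unif) = ennreal (1 - 1/q)"
proof -
  have w: "(\<integral>\<^sup>+y. ennreal (wq q y) \<partial>Unif) = ennreal (1/q)"
  proof -
    have "(\<integral>\<^sup>+y. ennreal (wq q y) \<partial>Unif) = Top q (\<lambda>_. 1) 0" by (simp add: Top_def)
    also have "\<dots> = ennreal (1/q) * Lop (\<lambda>_. 1) 0" by (rule Top_eq[OF q]) simp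
    also have "Lop (\<lambda>_. 1) 0 = 1" by (simp add: Lop_def)
    finally show ?thesis by simp
  qed
  have "(\<integral>\<^sup>+y. ennreal (1 - wq q y) \<partial>Unif) + (\<integral>\<^sup>+y. ennreal (wq q y) \<partial>Unif)
      = (\<integral>\<^sup>+y. ennreal (1 - wq q y) + ennreal (wq q y) \<partial>Unif)"
    by (rule nn_integral_add[symmetric]) auto
  also have "\<dots> = (\<integral>\<^sup>+y. 1 \<partial>Unif)"
    by (intro nn_integral_cong) (simp add: ennreal_plus[symmetric] wq_nonneg wq_le1 del: ennreal_plus)
  also have "\<dots> = 1" using prob_space.emeasure_space_1[OF prob_space_Unif] by simp
  finally have e: "(\<integral>\<^sup>+y. ennreal (1 - wq q y) \<partial>Unif) + ennreal (1/q) = 1" unfolding w .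
  have "(\<integral>\<^sup>+y. ennreal (1 - wq q y) \<partial>Unif) = 1 - ennreal (1/q)"
    using e by (metis ennreal_add_diff_cancel_right ennreal_neq_top)
  also have "\<dots> = ennreal (1 - 1/q)"
    using q by (subst ennreal_minus[symmetric]) auto
  finally show ?thesis .
qed

lemma subset_term:
  assumes q: "q \<ge> 1" and ab: "a \<le> b" and A: "A \<subseteq> {..<n}"
  shows "(\<integral>\<^sup>+x. indicator {a<..b} (\<Sum>i<n. x i powr q) * ((\<Prod>i\<in>A. ennreal (wq q (x i))) * (\<Prod>i\<in>{..<n} - A. ennreal (1 - wq q (x i)))) \<partial>PiM {..<n} (\<lambda>_. Unif))
     \<le> ennreal ((1/q)^card A * beta (b-a) (card A)) * ennreal (1 - 1/q) ^ (n - card A)"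
proof -
  define B where "B = {..<n} - A"
  have U: "{..<n} = B \<union> A" using A by (auto simp: B_def)
  have dj: "B \<inter> A = {}" by (auto simp: B_def)
  have fA: "finite A" using A finite_subset by blast
  have fB: "finite B" by (simp add: B_def)
  have cB: "card B = n - card A" unfolding B_def using A by (simp add: card_Diff_subset fA)
  let ?P = "\<lambda>I. PiM I (\<lambda>_::nat. Unif)"
  let ?F = "\<lambda>x. indicator {a<..b} (\<Sum>i\<in>B \<union> A. x i powr q) * ((\<Prod>i\<in>A. ennreal (wq q (x i))) * (\<Prod>i\<in>B. ennreal (1 - wq q (x i))))"
  let ?Phi = "ennreal ((1/q)^card A * beta (b-a) (card A))"
  have "(\<integral>\<^sup>+x. indicator {a<..b} (\<Sum>i<n. x i powr q) * ((\<Prod>i\<in>A. ennreal (wq q (x i))) * (\<Prod>i\<in>{..<n} - A. ennreal (1 - wq q (x i)))) \<partial>?P {..<n})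
      = (\<integral>\<^sup>+x. ?F x \<partial>?P (B \<union> A))"
    unfolding B_def[symmetric] unfolding U ..
  also have "\<dots> = (\<integral>\<^sup>+x. (\<integral>\<^sup>+y. ?F (merge B A (x, y)) \<partial>?P A) \<partial>?P B)"
    by (rule product_sigma_finite.product_nn_integral_fold[OF psf dj fB fA]) measurable
  also have "\<dots> \<le> (\<integral>\<^sup>+x. (\<Prod>i\<in>B. ennreal (1 - wq q (x i))) * ?Phi \<partial>?P B)"
  proof (rule nn_integral_mono)
    fix x
    let ?c = "\<Sum>i\<in>B. x i powr q"
    have "(\<integral>\<^sup>+y. ?F (merge B A (x, y)) \<partial>?P A)
        = (\<integral>\<^sup>+y. (\<Prod>i\<in>B. ennreal (1 - wq q (x i))) * (indicator {a<..b} (?c + (\<Sum>i\<in>A. y i powr q)) * (\<Prod>i\<in>A. ennreal (wq q (y i)))) \<partial>?P A)"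
    proof (rule nn_integral_cong)
      fix y
      have s: "(\<Sum>i\<in>B \<union> A. merge B A (x, y) i powr q) = ?c + (\<Sum>i\<in>A. y i powr q)"
        using dj fA fB by (simp add: sum.union_disjoint)
      have p1: "(\<Prod>i\<in>A. ennreal (wq q (merge B A (x, y) i))) = (\<Prod>i\<in>A. ennreal (wq q (y i)))"
        using dj by (intro prod.cong) auto
      have p2: "(\<Prod>i\<in>B. ennreal (1 - wq q (merge B A (x, y) i))) = (\<Prod>i\<in>B. ennreal (1 - wq q (x i)))"
        using dj by (intro prod.cong) auto
      show "?F (merge B A (x, y)) = (\<Prod>i\<in>B. ennreal (1 - wq q (x i))) * (indicator {a<..b} (?c + (\<Sum>i\<in>A. y i powr q)) * (\<Prod>i\<in>A. ennreal (wq q (y i))))"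
        unfolding s p1 p2 by (simp add: mult_ac)
    qed
    also have "\<dots> = (\<Prod>i\<in>B. ennreal (1 - wq q (x i))) * (\<integral>\<^sup>+y. indicator {a<..b} (?c + (\<Sum>i\<in>A. y i powr q)) * (\<Prod>i\<in>A. ennreal (wq q (y i))) \<partial>?P A)"
      by (rule nn_integral_cmult) measurable
    also have "(\<integral>\<^sup>+y. indicator {a<..b} (?c + (\<Sum>i\<in>A. y i powr q)) * (\<Prod>i\<in>A. ennreal (wq q (y i))) \<partial>?P A)
        = (Top q ^^ card A) (indicator {a<..b}) ?c"
      by (rule TA[OF fA]) measurable
    also have "\<dots> \<le> ?Phi" by (rule Phi_bound[OF q ab])
    finally show "(\<integral>\<^sup>+y. ?F (merge B A (x, y)) \<partial>?P A) \<le> (\<Prod>i\<in>B. ennreal (1 - wq q (x i))) * ?Phi"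
      by (simp add: mult_left_mono)
  qed
  also have "\<dots> = (\<integral>\<^sup>+x. (\<Prod>i\<in>B. ennreal (1 - wq q (x i))) \<partial>?P B) * ?Phi"
    by (rule nn_integral_multc) measurable
  also have "(\<integral>\<^sup>+x. (\<Prod>i\<in>B. ennreal (1 - wq q (x i))) \<partial>?P B) = (\<Prod>i\<in>B. \<integral>\<^sup>+y. ennreal (1 - wq q y) \<partial>Unif)"
    by (rule product_sigma_finite.product_nn_integral_prod[OF psf fB]) measurable
  also have "\<dots> = ennreal (1 - 1/q) ^ (n - card A)"
    using int_1mw[OF q] cB by simp
  finally show ?thesis by (simp add: mult_ac)
qed


lemma sum_Pow_card:
  fixes f :: "nat \<Rightarrow> 'a::comm_semiring_1"
  assumes "finite S"
  shows "(\<Sum>A\<in>Pow S. f (card A)) = (\<Sum>k\<le>card S. of_nat (card S choose k) * f k)"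
proof -
  have "(\<Sum>A\<in>Pow S. f (card A)) = (\<Sum>k\<le>card S. \<Sum>A\<in>{A. A \<in> Pow S \<and> card A = k}. f (card A))"
    by (rule sum.group[symmetric]) (use assms in \<open>auto intro: card_mono\<close>)
  also have "\<dots> = (\<Sum>k\<le>card S. of_nat (card S choose k) * f k)"
  proof (rule sum.cong)
    fix k
    have "(\<Sum>A\<in>{A. A \<in> Pow S \<and> card A = k}. f (card A)) = (\<Sum>A\<in>{A. A \<subseteq> S \<and> card A = k}. f k)"
      by (rule sum.cong) auto
    also have "\<dots> = of_nat (card {A. A \<subseteq> S \<and> card A = k}) * f k" by simp
    also have "card {A. A \<subseteq> S \<and> card A = k} = card S choose k" by (rule n_subsets[OF assms])
    finally show "(\<Sum>A\<in>{A. A \<in> Pow S \<and> card A = k}. f (card A)) = of_nat (card S choose k) * f k" .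
  qed simp
  finally show ?thesis .
qed

lemma emeasure_bound:
  assumes q: "q \<ge> 1" and ab: "a \<le> b"
  shows "emeasure (PiM {..<n} (\<lambda>_. Unif)) {x \<in> space (PiM {..<n} (\<lambda>_. Unif)). (\<Sum>i<n. x i powr q) \<in> {a<..b}}
    \<le> ennreal (\<Sum>k\<le>n. real (n choose k) * ((1/q)^k * beta (b-a) k) * (1 - 1/q)^(n-k))"
proof -
  let ?P = "PiM {..<n} (\<lambda>_::nat. Unif)"
  let ?S = "\<lambda>x. \<Sum>i<n. x i powr q"
  let ?T = "\<lambda>A x. indicator {a<..b} (?S x) * ((\<Prod>i\<in>A. ennreal (wq q (x i))) * (\<Prod>i\<in>{..<n} - A. ennreal (1 - wq q (x i))))"
  let ?G = "\<lambda>k. ennreal ((1/q)^k * beta (b-a) k) * ennreal (1 - 1/q) ^ (n - k)"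
  have q0: "0 \<le> 1 - 1/q" using q by simp
  have meas: "{x \<in> space ?P. ?S x \<in> {a<..b}} \<in> sets ?P" by measurable
  have "emeasure ?P {x \<in> space ?P. ?S x \<in> {a<..b}} = (\<integral>\<^sup>+x. indicator {x \<in> space ?P. ?S x \<in> {a<..b}} x \<partial>?P)"
    by (rule nn_integral_indicator[OF meas, symmetric])
  also have "\<dots> = (\<integral>\<^sup>+x. (\<Sum>A\<in>Pow {..<n}. ?T A x) \<partial>?P)"
  proof (rule nn_integral_cong)
    fix x assume x: "x \<in> space ?P"
    have one: "(\<Prod>i<n. ennreal (wq q (x i)) + ennreal (1 - wq q (x i))) = 1"
      by (intro prod.neutral ballI) (simp add: ennreal_plus[symmetric] wq_nonneg wq_le1 del: ennreal_plus)
    have "indicator {x \<in> space ?P. ?S x \<in> {a<..b}} x = indicator {a<..b} (?S x) * (\<Prod>i<n. ennreal (wq q (x i)) + ennreal (1 - wq q (x i)))"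
      using x unfolding one by (simp add: indicator_def)
    also have "\<dots> = (\<Sum>A\<in>Pow {..<n}. ?T A x)"
      by (subst prod_add) (simp_all add: sum_distrib_left)
    finally show "indicator {x \<in> space ?P. ?S x \<in> {a<..b}} x = (\<Sum>A\<in>Pow {..<n}. ?T A x)" .
  qed
  also have "\<dots> = (\<Sum>A\<in>Pow {..<n}. \<integral>\<^sup>+x. ?T A x \<partial>?P)"
  proof (rule nn_integral_sum)
    fix A assume "A \<in> Pow {..<n}"
    then have A: "A \<subseteq> {..<n}" by simp
    have w1: "i < n \<Longrightarrow> (\<lambda>x. ennreal (wq q (x i))) \<in> borel_measurable ?P" for i by measurable
    have w2: "i < n \<Longrightarrow> (\<lambda>x. ennreal (1 - wq q (x i))) \<in> borel_measurable ?P" for i by measurable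
    have s: "(\<lambda>x. indicator {a<..b} (?S x) :: ennreal) \<in> borel_measurable ?P" by measurable
    show "(\<lambda>x. ?T A x) \<in> borel_measurable ?P"
      by (intro borel_measurable_times_ennreal borel_measurable_prod_ennreal s w1 w2) (use A in auto)
  qed
  also have "\<dots> \<le> (\<Sum>A\<in>Pow {..<n}. ?G (card A))"
    by (intro sum_mono subset_term[OF q ab]) auto
  also have "\<dots> = (\<Sum>k\<le>n. of_nat (n choose k) * ?G k)"
    using sum_Pow_card[of "{..<n}" ?G] by simp
  also have "\<dots> = ennreal (\<Sum>k\<le>n. real (n choose k) * ((1/q)^k * beta (b-a) k) * (1 - 1/q)^(n-k))"
  proof -
    have "of_nat (n choose k) * ?G k = ennreal (real (n choose k) * ((1/q)^k * beta (b-a) k) * (1 - 1/q)^(n-k))" for k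
    proof -
      have y: "0 \<le> (1/q)^k * beta (b-a) k" using q ab by (simp add: beta_nonneg)
      have z: "0 \<le> (1 - 1/q)^(n-k)" using q0 by simp
      have "of_nat (n choose k) * ?G k = ennreal (real (n choose k)) * (ennreal ((1/q)^k * beta (b-a) k) * ennreal ((1 - 1/q)^(n-k)))"
        using q0 by (simp add: ennreal_power ennreal_of_nat_eq_real_of_nat)
      also have "\<dots> = ennreal (real (n choose k) * (((1/q)^k * beta (b-a) k) * (1 - 1/q)^(n-k)))"
        using y z by (simp add: ennreal_mult)
      finally show ?thesis by (simp add: mult.assoc)
    qed
    then have "(\<Sum>k\<le>n. of_nat (n choose k) * ?G k) = (\<Sum>k\<le>n. ennreal (real (n choose k) * ((1/q)^k * beta (b-a) k) * (1 - 1/q)^(n-k)))"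
      by simp
    also have "\<dots> = ennreal (\<Sum>k\<le>n. real (n choose k) * ((1/q)^k * beta (b-a) k) * (1 - 1/q)^(n-k))"
      using q0 ab q by (intro sum_ennreal mult_nonneg_nonneg) (simp_all add: beta_nonneg)
    finally show ?thesis .
  qed
  finally show ?thesis .
qed

lemma binom_real_bound:
  assumes n: "n \<ge> 1" and q: "q \<ge> 1" and h: "h \<ge> 0"
  shows "(\<Sum>k\<le>n. real (n choose k) * ((1/q)^k * beta h k) * (1 - 1/q)^(n-k)) \<le> exp (- (real n / q) / 4) + 4 * h * sqrt (q / real n)"
proof -
  define p where "p = 1/q"
  define m where "m = real n * p"
  have p0: "0 < p" and p1: "p \<le> 1" using q by (auto simp: p_def)
  have m0: "m > 0" using n p0 by (simp add: m_def)
  define w where "w k = real (n choose k) * p^k * (1 - p)^(n-k)" for k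
  have w0: "w k \<ge> 0" for k using p1 p0 by (simp add: w_def)
  have wsum: "(\<Sum>k\<le>n. w k) = 1"
    using binomial_ring[of p "1 - p" n] by (simp add: w_def)
  have bk: "beta h k \<le> (if real k < m/4 then 1 else 0) + 4 * h / sqrt m" for k
  proof (cases "real k < m/4")
    case True
    have "0 \<le> 4 * h / sqrt m" using h m0 by simp
    moreover have "beta h k \<le> 1" by (simp add: beta_def)
    ultimately show ?thesis using True by simp
  next
    case False
    then have k1: "k \<ge> 1" using m0 by (cases k) auto
    have "beta h k \<le> 2 * h / sqrt (real k + 1)" using k1 by (simp add: beta_def)
    also have "\<dots> \<le> 2 * h / sqrt (m/4)"
      using False m0 h by (intro divide_left_mono mult_nonneg_nonneg real_sqrt_le_mono) auto
    also have "sqrt (m/4) = sqrt m / 2" by (simp add: real_sqrt_divide)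
    also have "2 * h / (sqrt m / 2) = 4 * h / sqrt m" by simp
    finally show ?thesis using False by simp
  qed
  have ind: "(if real k < m/4 then 1 else 0) \<le> exp (m/4) * exp (-1)^k" for k
  proof (cases "real k < m/4")
    case True
    have "exp (m/4) * exp (-1)^k = exp (m/4 - real k)"
      by (simp add: exp_of_nat_mult[symmetric] exp_add[symmetric])
    also have "\<dots> \<ge> 1" using True by simp
    finally show ?thesis using True by simp
  qed simp
  have "(\<Sum>k\<le>n. real (n choose k) * ((1/q)^k * beta h k) * (1 - 1/q)^(n-k)) = (\<Sum>k\<le>n. w k * beta h k)"
    by (simp add: w_def p_def mult_ac)
  also have "\<dots> \<le> (\<Sum>k\<le>n. w k * ((if real k < m/4 then 1 else 0) + 4 * h / sqrt m))"
    by (intro sum_mono mult_left_mono bk w0)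
  also have "\<dots> = (\<Sum>k\<le>n. w k * (if real k < m/4 then 1 else 0)) + 4 * h / sqrt m"
    by (simp only: distrib_left sum.distrib sum_distrib_right[symmetric] wsum mult_1)
  also have "(\<Sum>k\<le>n. w k * (if real k < m/4 then 1 else 0)) \<le> (\<Sum>k\<le>n. w k * (exp (m/4) * exp (-1)^k))"
    by (intro sum_mono mult_left_mono ind w0)
  also have "\<dots> = exp (m/4) * (p * exp (-1) + (1 - p))^n"
    by (simp add: binomial_ring[of "p * exp (-1)" "1 - p" n] w_def sum_distrib_left power_mult_distrib mult_ac)
  also have "(p * exp (-1) + (1 - p))^n \<le> exp (- p / 2)^n"
  proof (rule power_mono)
    have e: "exp (-1::real) \<le> 1/2"
    proof -
      have "2 \<le> exp (1::real)" using exp_ge_add_one_self[of "1::real"] by simp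
      then show ?thesis by (simp add: exp_minus field_simps)
    qed
    have pe: "p * exp (-1) \<le> p * (1/2)" by (rule mult_left_mono[OF e]) (use p0 in simp)
    have "p * exp (-1) + (1 - p) \<le> 1 + (- p / 2)" using pe by linarith
    also have "\<dots> \<le> exp (- p / 2)" by (rule exp_ge_add_one_self)
    finally show "p * exp (-1) + (1 - p) \<le> exp (- p / 2)" .
    show "0 \<le> p * exp (-1) + (1 - p)" using p0 p1 by (simp add: add_nonneg_nonneg)
  qed
  also have "exp (- p / 2)^n = exp (- m / 2)"
    by (simp add: exp_of_nat_mult[symmetric] m_def)
  finally have "(\<Sum>k\<le>n. real (n choose k) * ((1/q)^k * beta h k) * (1 - 1/q)^(n-k)) \<le> exp (m/4) * exp (- m / 2) + 4 * h / sqrt m"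
    by (simp add: mult_left_mono)
  also have "exp (m/4) * exp (- m / 2) = exp (- m / 4)" by (simp add: exp_add[symmetric])
  also have "m = real n / q" by (simp add: m_def p_def)
  also have "4 * h / sqrt (real n / q) = 4 * h * sqrt (q / real n)"
    using q n by (simp add: real_sqrt_divide field_simps)
  finally show ?thesis .
qed

lemma unif_cube_eq: "unif_cube n = PiM {..<n} (\<lambda>_. Unif)"
  by (simp add: unif_cube_def Unif_def)

lemma cdf_diff:
  assumes n: "n \<ge> 1" and q: "q \<ge> 1" and h: "h \<ge> 0"
  shows "sumpow_cdf n q t - sumpow_cdf n q (t - h) \<le> exp (- (real n / q) / 4) + 4 * h * sqrt (q / real n)"
    and "0 \<le> sumpow_cdf n q t - sumpow_cdf n q (t - h)"
proof -
  let ?P = "PiM {..<n} (\<lambda>_::nat. Unif)"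
  let ?S = "\<lambda>x. \<Sum>i<n. x i powr q"
  interpret P: prob_space ?P by (intro prob_space_PiM prob_space_Unif)
  have m1: "{x \<in> space ?P. ?S x \<le> t} \<in> sets ?P" by measurable
  have m2: "{x \<in> space ?P. ?S x \<le> t - h} \<in> sets ?P" by measurable
  have sub: "{x \<in> space ?P. ?S x \<le> t - h} \<subseteq> {x \<in> space ?P. ?S x \<le> t}" using h by auto
  have diff: "{x \<in> space ?P. ?S x \<le> t} - {x \<in> space ?P. ?S x \<le> t - h} = {x \<in> space ?P. ?S x \<in> {t - h<..t}}"
    by auto
  have eq: "sumpow_cdf n q t - sumpow_cdf n q (t - h) = measure ?P {x \<in> space ?P. ?S x \<in> {t - h<..t}}"
    unfolding sumpow_cdf_def unif_cube_eq
    using P.finite_measure_Diff[OF m1 m2 sub] diff by simp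
  show "0 \<le> sumpow_cdf n q t - sumpow_cdf n q (t - h)" unfolding eq by simp
  have "emeasure ?P {x \<in> space ?P. ?S x \<in> {t - h<..t}}
      \<le> ennreal (\<Sum>k\<le>n. real (n choose k) * ((1/q)^k * beta (t - (t - h)) k) * (1 - 1/q)^(n-k))"
    by (rule emeasure_bound[OF q]) (use h in simp)
  also have "(\<Sum>k\<le>n. real (n choose k) * ((1/q)^k * beta (t - (t - h)) k) * (1 - 1/q)^(n-k))
      \<le> exp (- (real n / q) / 4) + 4 * h * sqrt (q / real n)"
    using binom_real_bound[OF n q h] by simp
  finally have "emeasure ?P {x \<in> space ?P. ?S x \<in> {t - h<..t}} \<le> ennreal (exp (- (real n / q) / 4) + 4 * h * sqrt (q / real n))"
    by (simp add: ennreal_leI order_trans)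
  then have "measure ?P {x \<in> space ?P. ?S x \<in> {t - h<..t}} \<le> exp (- (real n / q) / 4) + 4 * h * sqrt (q / real n)"
    unfolding measure_def using q h by (intro enn2real_leI) auto
  then show "sumpow_cdf n q t - sumpow_cdf n q (t - h) \<le> exp (- (real n / q) / 4) + 4 * h * sqrt (q / real n)"
    unfolding eq .
qed

lemma psi_bounds:
  assumes d: "d \<ge> 2" and q: "q \<ge> 1" and l: "0 \<le> l"
  shows "0 \<le> psi d q l"
    and "psi d q l \<le> exp (- (real (d - 1) / q) / 4) + 4 * sqrt (q / real (d - 1)) * l powr q"
proof -
  have n: "d - 1 \<ge> 1" using d by simp
  have h: "l powr q \<ge> 0" by simp
  show "0 \<le> psi d q l" unfolding psi_def by (rule cdf_diff(2)[OF n q h])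
  show "psi d q l \<le> exp (- (real (d - 1) / q) / 4) + 4 * sqrt (q / real (d - 1)) * l powr q"
    unfolding psi_def using cdf_diff(1)[OF n q h] by (simp add: mult_ac)
qed

lemma sq_sum_le: "((a::real) + b)^2 \<le> 2 * a^2 + 2 * b^2"
proof -
  have "(a+b)^2 + (a-b)^2 = 2 * a^2 + 2 * b^2" by (simp add: power2_eq_square algebra_simps)
  moreover have "0 \<le> (a-b)^2" by simp
  ultimately show ?thesis by linarith
qed

lemma int_powr: "q \<ge> 1 \<Longrightarrow> ((\<lambda>l::real. l powr q) has_integral (1 / (q + 1))) {0..1}"
  using has_integral_powr_from_0[of q 1] by simp

lemma int_psi:
  assumes d: "d \<ge> 2" and q: "q \<ge> 1"
  shows "0 \<le> integral {0..1} (psi d q)"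
    and "integral {0..1} (psi d q) \<le> exp (- (real (d - 1) / q) / 4) + 4 * sqrt (q / real (d - 1)) / (q + 1)"
proof -
  let ?E = "exp (- (real (d - 1) / q) / 4)"
  let ?c = "4 * sqrt (q / real (d - 1))"
  have c0: "?c \<ge> 0" using q d by simp
  have bnd: "((\<lambda>l. ?E + ?c * l powr q) has_integral (?E * 1 + ?c * (1 / (q + 1)))) {0..1}"
    by (intro has_integral_add has_integral_mult_right int_powr q) (use has_integral_const_real[of ?E 0 1] in simp)
  show "0 \<le> integral {0..1} (psi d q)"
  proof (cases "psi d q integrable_on {0..1}")
    case True
    then show ?thesis by (rule integral_nonneg) (use psi_bounds(1)[OF d q] in auto)
  qed (simp add: not_integrable_integral)
  show "integral {0..1} (psi d q) \<le> ?E + ?c / (q + 1)"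
  proof (cases "psi d q integrable_on {0..1}")
    case True
    have "integral {0..1} (psi d q) \<le> ?E * 1 + ?c * (1 / (q + 1))"
      by (rule has_integral_le[OF integrable_integral[OF True] bnd]) (use psi_bounds(2)[OF d q] in auto)
    then show ?thesis by simp
  next
    case False
    then have "integral {0..1} (psi d q) = 0" by (simp add: not_integrable_integral)
    moreover have "0 \<le> ?E + ?c / (q + 1)" using c0 q by simp
    ultimately show ?thesis by simp
  qed
qed

lemma int_psi2:
  assumes d: "d \<ge> 2" and q: "q \<ge> 1"
  shows "0 \<le> integral {0..1} (\<lambda>l. (psi d q l)\<^sup>2)"
    and "integral {0..1} (\<lambda>l. (psi d q l)\<^sup>2) \<le> 2 * exp (- (real (d - 1) / q) / 4)^2 + 32 * (q / real (d - 1)) / (2 * q + 1)"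
proof -
  let ?E = "exp (- (real (d - 1) / q) / 4)"
  let ?c = "4 * sqrt (q / real (d - 1))"
  have c0: "?c \<ge> 0" using q d by simp
  have cc: "?c^2 = 16 * (q / real (d - 1))"
  proof -
    have "0 \<le> q / real (d - 1)" using q by simp
    then have "(sqrt (q / real (d - 1)))^2 = q / real (d - 1)" by (rule real_sqrt_pow2)
    then show ?thesis by (simp only: power_mult_distrib) simp
  qed
  have bnd: "((\<lambda>l. 2 * ?E^2 + 2 * ?c^2 * l powr (2 * q)) has_integral (2 * ?E^2 * 1 + 2 * ?c^2 * (1 / (2 * q + 1)))) {0..1}"
  proof (intro has_integral_add has_integral_mult_right)
    show "((\<lambda>l::real. 2 * ?E^2) has_integral 2 * ?E^2 * 1) {0..1}"
      using has_integral_const_real[of "2 * ?E^2" 0 1] by simp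
    show "((\<lambda>l::real. l powr (2 * q)) has_integral 1 / (2 * q + 1)) {0..1}"
      using int_powr[of "2 * q"] q by simp
  qed
  have pt: "(psi d q l)\<^sup>2 \<le> 2 * ?E^2 + 2 * ?c^2 * l powr (2 * q)" if l: "l \<in> {0..1}" for l
  proof -
    have a: "0 \<le> psi d q l" using psi_bounds(1)[OF d q] l by simp
    have b: "psi d q l \<le> ?E + ?c * l powr q" using psi_bounds(2)[OF d q] l by simp
    have "(psi d q l)\<^sup>2 \<le> (?E + ?c * l powr q)\<^sup>2" using a b by (intro power_mono) auto
    also have "\<dots> \<le> 2 * ?E^2 + 2 * (?c * l powr q)^2"
      by (rule sq_sum_le)
    also have "(?c * l powr q)^2 = ?c^2 * l powr (2 * q)"
    proof -
      have "(l powr q)^2 = l powr (2 * q)"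
        by (simp only: power2_eq_square powr_add[symmetric] mult_2)
      then show ?thesis by (simp only: power_mult_distrib)
    qed
    finally show ?thesis by (simp add: mult_ac)
  qed
  show "0 \<le> integral {0..1} (\<lambda>l. (psi d q l)\<^sup>2)"
  proof (cases "(\<lambda>l. (psi d q l)\<^sup>2) integrable_on {0..1}")
    case True
    then show ?thesis by (rule integral_nonneg) auto
  qed (simp add: not_integrable_integral)
  show "integral {0..1} (\<lambda>l. (psi d q l)\<^sup>2) \<le> 2 * ?E^2 + 32 * (q / real (d - 1)) / (2 * q + 1)"
  proof (cases "(\<lambda>l. (psi d q l)\<^sup>2) integrable_on {0..1}")
    case True
    have "integral {0..1} (\<lambda>l. (psi d q l)\<^sup>2) \<le> 2 * ?E^2 * 1 + 2 * ?c^2 * (1 / (2 * q + 1))"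
      by (rule has_integral_le[OF integrable_integral[OF True] bnd]) (use pt in auto)
    then show ?thesis unfolding cc by simp
  next
    case False
    then have "integral {0..1} (\<lambda>l. (psi d q l)\<^sup>2) = 0" by (simp add: not_integrable_integral)
    moreover have "0 \<le> 2 * ?E^2 + 32 * (q / real (d - 1)) / (2 * q + 1)" using q d by simp
    ultimately show ?thesis by simp
  qed
qed

lemma ln_ge_eighth: "(D::real) \<ge> 2 \<Longrightarrow> 1/8 \<le> ln D"
proof -
  assume D: "D \<ge> 2"
  have "norm (exp (1/8::real)) \<le> 2" by (rule exp_bound_half) simp
  then have "exp (1/8::real) \<le> D" using D by simp
  then show ?thesis using D by (subst ln_ge_iff) auto
qed

lemma E_bound:
  fixes D q :: real
  assumes D: "D \<ge> 3" and q: "q \<ge> 1" and qD: "q \<le> (1/8) * (D / ln D)"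
  shows "exp (- ((D - 1) / q) / 4) \<le> 1 / D" and "q \<le> D"
proof -
  have lnp: "ln D > 0" using D by simp
  have "q * (8 * ln D) \<le> D" using qD lnp by (simp add: field_simps)
  then have a: "4 * q * ln D \<le> D - 1" using D by simp
  have "ln D \<le> ((D - 1) / q) / 4" using a q by (simp add: field_simps)
  then have "exp (- ((D - 1) / q) / 4) \<le> exp (- ln D)" by simp
  also have "\<dots> = 1 / D" using D by (simp add: exp_minus inverse_eq_divide)
  finally show "exp (- ((D - 1) / q) / 4) \<le> 1 / D" .
  have "1/8 \<le> ln D" using D by (intro ln_ge_eighth) simp
  then have "q * 1 \<le> q * (8 * ln D)" using q by (intro mult_left_mono) auto
  then show "q \<le> D" using \<open>q * (8 * ln D) \<le> D\<close> by simp
qed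

lemma ineq1:
  fixes D q E :: real
  assumes D: "D \<ge> 3" and q: "q \<ge> 1" and qD: "q \<le> D" and E: "E \<le> 1 / D"
  shows "E + 4 * sqrt (q / (D - 1)) / (q + 1) \<le> 7 / sqrt (D * q)"
proof -
  have s: "sqrt (D * q) > 0" using D q by simp
  have "sqrt (D * q) \<le> sqrt (D * D)" using D qD by (intro real_sqrt_le_mono mult_left_mono) auto
  also have "sqrt (D * D) = D" using D by simp
  finally have "1 / D \<le> 1 / sqrt (D * q)" using s D by (intro divide_left_mono) (auto intro: mult_pos_pos)
  with E have e: "E \<le> 1 / sqrt (D * q)" by simp
  have "sqrt (q / (D - 1)) / (q + 1) \<le> sqrt (q / (D - 1)) / q"
    using q D by (intro divide_left_mono) auto
  also have "\<dots> = sqrt (q / (D - 1)) / sqrt (q^2)"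
    using q by simp
  also have "\<dots> = sqrt (q / (D - 1) / q^2)"
    by (simp only: real_sqrt_divide)
  also have "q / (D - 1) / q^2 = 1 / ((D - 1) * q)"
  proof -
    have "D - 1 > 0" "q > 0" using D q by auto
    then show ?thesis by (simp add: power2_eq_square field_simps)
  qed
  also have "sqrt (1 / ((D - 1) * q)) \<le> sqrt (2 / (D * q))"
    using D q by (intro real_sqrt_le_mono) (simp add: field_simps)
  also have "\<dots> = sqrt 2 / sqrt (D * q)" by (simp add: real_sqrt_divide)
  also have "\<dots> \<le> (3/2) / sqrt (D * q)"
  proof (intro divide_right_mono)
    have "sqrt 2 \<le> sqrt ((3/2)^2)" by (intro real_sqrt_le_mono) (simp add: power2_eq_square)
    then show "sqrt 2 \<le> 3/2" by simp
  qed (use s in simp)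
  finally have a: "sqrt (q / (D - 1)) / (q + 1) \<le> (3/2) / sqrt (D * q)" .
  have "E + 4 * sqrt (q / (D - 1)) / (q + 1) \<le> 1 / sqrt (D * q) + 4 * ((3/2) / sqrt (D * q))"
    using e a by simp
  also have "\<dots> = 7 / sqrt (D * q)" by (simp add: field_simps)
  finally show ?thesis .
qed

lemma ineq2:
  fixes D q E :: real
  assumes D: "D \<ge> 3" and q: "q \<ge> 1" and E: "E \<le> 1 / D" and E0: "0 \<le> E"
  shows "2 * E^2 + 32 * (q / (D - 1)) / (2 * q + 1) \<le> 34 / D"
proof -
  have "E^2 \<le> (1/D)^2" using E E0 by (intro power_mono) auto
  also have "(1/D)^2 \<le> 1/D" using D by (simp add: power2_eq_square field_simps)
  finally have a: "E^2 \<le> 1/D" .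
  have b: "q / (D - 1) / (2 * q + 1) \<le> 1 / D"
  proof -
    have "0 \<le> q * (D - 2)" using D q by simp
    then have k: "D * q \<le> (D - 1) * (2 * q + 1)" using D by (simp add: algebra_simps)
    have p1: "D - 1 > 0" "2 * q + 1 > 0" "D > 0" using D q by auto
    define Z where "Z = (D - 1) * (2 * q + 1)"
    have Z: "Z > 0" using p1 by (simp add: Z_def)
    have "q / (D - 1) / (2 * q + 1) = q / Z" by (simp add: Z_def)
    also have "\<dots> = (D * q) / (Z * D)" using Z p1 by (simp add: field_simps)
    also have "\<dots> \<le> Z / (Z * D)" by (rule divide_right_mono) (use k Z p1 in \<open>simp_all add: Z_def\<close>)
    also have "\<dots> = 1 / D" using Z by simp
    finally show ?thesis .
  qed
  have "32 * (q / (D - 1)) / (2 * q + 1) = 32 * (q / (D - 1) / (2 * q + 1))" by simp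
  moreover have "34 / D = 2 * (1/D) + 32 * (1/D)" by simp
  ultimately show ?thesis using a b by linarith
qed

theorem claim5p1:
  fixes q :: "nat \<Rightarrow> real"
  assumes "\<And>d. q d \<ge> 1"
    and "q \<in> o(\<lambda>d. real d / ln (real d))"
  shows "(\<lambda>d. integral {0..1} (psi d (q d))) \<in> O(\<lambda>d. 1 / sqrt (real d * q d)) \<and>
         (\<lambda>d. integral {0..1} (\<lambda>l. (psi d (q d) l)\<^sup>2)) \<in> O(\<lambda>d. 1 / real d)"
proof -
  have q1: "q d \<ge> 1" for d by (rule assms(1))
  have ev: "eventually (\<lambda>d. norm (q d) \<le> (1/8) * norm (real d / ln (real d))) at_top"
    using landau_o.smallD[OF assms(2), of "1/8"] by simp
  have ev3: "eventually (\<lambda>d::nat. d \<ge> 3) at_top" by (rule eventually_ge_at_top)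
  have key: "eventually (\<lambda>d. 3 \<le> d \<and> exp (- ((real d - 1) / q d) / 4) \<le> 1 / real d \<and> q d \<le> real d) at_top"
    using ev ev3
  proof eventually_elim
    case (elim d)
    have D: "real d \<ge> 3" using elim(2) by simp
    have lnp: "ln (real d) > 0" using D by simp
    have "q d \<le> (1/8) * (real d / ln (real d))"
      using elim(1) q1[of d] lnp D by simp
    from E_bound[OF D q1 this] show ?case using elim(2) by simp
  qed
  have A: "(\<lambda>d. integral {0..1} (psi d (q d))) \<in> O(\<lambda>d. 1 / sqrt (real d * q d))"
  proof (rule bigoI[where c=7])
    show "eventually (\<lambda>d. norm (integral {0..1} (psi d (q d))) \<le> 7 * norm (1 / sqrt (real d * q d))) at_top"
      using key
    proof eventually_elim
      case (elim d)
      have d2: "d \<ge> 2" using elim by simp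
      have D: "real d \<ge> 3" using elim by simp
      have rd: "real (d - 1) = real d - 1" using d2 by (simp add: of_nat_diff)
      have "norm (integral {0..1} (psi d (q d))) = integral {0..1} (psi d (q d))"
        using int_psi(1)[OF d2 q1] by simp
      also have "\<dots> \<le> exp (- (real (d - 1) / q d) / 4) + 4 * sqrt (q d / real (d - 1)) / (q d + 1)"
        by (rule int_psi(2)[OF d2 q1])
      also have "\<dots> \<le> 7 / sqrt (real d * q d)"
        unfolding rd by (rule ineq1[OF D q1]) (use elim in auto)
      also have "\<dots> = 7 * norm (1 / sqrt (real d * q d))"
        using D q1[of d] by simp
      finally show ?case .
    qed
  qed
  have B: "(\<lambda>d. integral {0..1} (\<lambda>l. (psi d (q d) l)\<^sup>2)) \<in> O(\<lambda>d. 1 / real d)"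
  proof (rule bigoI[where c=34])
    show "eventually (\<lambda>d. norm (integral {0..1} (\<lambda>l. (psi d (q d) l)\<^sup>2)) \<le> 34 * norm (1 / real d)) at_top"
      using key
    proof eventually_elim
      case (elim d)
      have d2: "d \<ge> 2" using elim by simp
      have D: "real d \<ge> 3" using elim by simp
      have rd: "real (d - 1) = real d - 1" using d2 by (simp add: of_nat_diff)
      have "norm (integral {0..1} (\<lambda>l. (psi d (q d) l)\<^sup>2)) = integral {0..1} (\<lambda>l. (psi d (q d) l)\<^sup>2)"
        using int_psi2(1)[OF d2 q1] by simp
      also have "\<dots> \<le> 2 * exp (- (real (d - 1) / q d) / 4)^2 + 32 * (q d / real (d - 1)) / (2 * q d + 1)"
        by (rule int_psi2(2)[OF d2 q1])
      also have "\<dots> \<le> 34 / real d"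
        unfolding rd by (rule ineq2[OF D q1]) (use elim in auto)
      also have "\<dots> = 34 * norm (1 / real d)"
        using D by simp
      finally show ?case .
    qed
  qed
  from A B show ?thesis ..
qed

end
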